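(* Suppose Assumptions 1–4 hold and $p$ is convex. Let $\mathbf{x}$ be a Cournot candidate and $\mathbf{x}^S$ a social optimum. If $p(X)=p(X^S)$, then $p'(X)=0$ and $\gamma(\mathbf{x})=1$.
   Context: Cournot model: $N$ suppliers, inverse demand $p:[0,\infty)\to[0,\infty)$, supplier $n$ has cost $C_n:[0,\infty)\to[0,\infty)$ and chooses $x_n\ge0$; $X=\sum_n x_n$, $X^S=\sum_n x_n^S$. $\partial_\pm$ denote right/left derivatives; $C_n'(0)$ is the right derivative at $0$. Assumption 1: each $C_n$ is convex, continuous, nondecreasing on $[0,\infty)$, continuously differentiable on $(0,\infty)$, with $C_n(0)=0$. Assumption 2: $p$ is continuous, nonnegative, nonincreasing, $p(0)>0$; its right derivative at $0$ exists and at every $q>0$ its left and right derivatives exist. Assumption 3: there exists $R>0$ such that $p(R)\le\min_n C_n'(0)$. Assumption 4: $p(0)>\min_n C_n'(0)$. Social welfare of $\mathbf{x}\ge0$: $W(\mathbf{x})=\int_0^X p(q)\,dq-\sum_{n=1}^N C_n(x_n)$; a social optimum maximizes $W$. Efficiency: $\gamma(\mathbf{x})=W(\mathbf{x})/W(\mathbf{x}^S)$ for a social optimum $\mathbf{x}^S$. A nonnegative vector $\mathbf{x}$ is a Cournot candidate if for every $n$: $C_n'(x_n)\le p(X)+x_n\,\partial_-p(X)$ whenever $x_n>0$, and $C_n'(x_n)\ge p(X)+x_n\,\partial_+p(X)$. (For convex $p$ and $X>0$, $p$ is differentiable at $X$.) *)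

theory Defs
  imports "HOL-Analysis.Analysis"
begin

definition has_right_deriv :: "(real \<Rightarrow> real) \<Rightarrow> real \<Rightarrow> real \<Rightarrow> bool" where
  "has_right_deriv f x D \<longleftrightarrow> ((\<lambda>h. (f (x + h) - f x) / h) \<longlongrightarrow> D) (at_right 0)"

definition has_left_deriv :: "(real \<Rightarrow> real) \<Rightarrow> real \<Rightarrow> real \<Rightarrow> bool" where
  "has_left_deriv f x D \<longleftrightarrow> ((\<lambda>h. (f (x + h) - f x) / h) \<longlongrightarrow> D) (at_left 0)"

definition rderiv :: "(real \<Rightarrow> real) \<Rightarrow> real \<Rightarrow> real" where
  "rderiv f x = Lim (at_right 0) (\<lambda>h. (f (x + h) - f x) / h)"

definition lderiv :: "(real \<Rightarrow> real) \<Rightarrow> real \<Rightarrow> real" where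
  "lderiv f x = Lim (at_left 0) (\<lambda>h. (f (x + h) - f x) / h)"

definition cost_assms :: "nat \<Rightarrow> (nat \<Rightarrow> real \<Rightarrow> real) \<Rightarrow> bool" where
  "cost_assms N C \<longleftrightarrow> (\<forall>n<N.
      convex_on {0..} (C n) \<and> continuous_on {0..} (C n) \<and> mono_on {0..} (C n) \<and>
      (\<forall>x>0. C n differentiable (at x)) \<and> continuous_on {0<..} (deriv (C n)) \<and>
      C n 0 = 0)"

definition demand_assms :: "(real \<Rightarrow> real) \<Rightarrow> bool" where
  "demand_assms p \<longleftrightarrow> continuous_on {0..} p \<and> (\<forall>q\<ge>0. p q \<ge> 0) \<and>
      (\<forall>a b. 0 \<le> a \<longrightarrow> a \<le> b \<longrightarrow> p b \<le> p a) \<and> p 0 > 0 \<and>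
      (\<exists>D. has_right_deriv p 0 D) \<and>
      (\<forall>q>0. (\<exists>D. has_left_deriv p q D) \<and> (\<exists>D. has_right_deriv p q D))"

text \<open>Marginal cost C_n'(x): derivative for x>0, right derivative at 0
  (the right derivative coincides with the derivative for x>0).\<close>
definition mc :: "(nat \<Rightarrow> real \<Rightarrow> real) \<Rightarrow> nat \<Rightarrow> real \<Rightarrow> real" where
  "mc C n x = rderiv (C n) x"

definition min_mc0 :: "nat \<Rightarrow> (nat \<Rightarrow> real \<Rightarrow> real) \<Rightarrow> real" where
  "min_mc0 N C = Min ((\<lambda>n. mc C n 0) ` {..<N})"

definition total :: "nat \<Rightarrow> (nat \<Rightarrow> real) \<Rightarrow> real" where
  "total N x = (\<Sum>n<N. x n)"

definition nonneg_prof :: "nat \<Rightarrow> (nat \<Rightarrow> real) \<Rightarrow> bool" where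
  "nonneg_prof N x \<longleftrightarrow> (\<forall>n<N. x n \<ge> 0)"

definition welfare :: "nat \<Rightarrow> (real \<Rightarrow> real) \<Rightarrow> (nat \<Rightarrow> real \<Rightarrow> real) \<Rightarrow> (nat \<Rightarrow> real) \<Rightarrow> real" where
  "welfare N p C x = integral {0..total N x} p - (\<Sum>n<N. C n (x n))"

definition social_optimum :: "nat \<Rightarrow> (real \<Rightarrow> real) \<Rightarrow> (nat \<Rightarrow> real \<Rightarrow> real) \<Rightarrow> (nat \<Rightarrow> real) \<Rightarrow> bool" where
  "social_optimum N p C xS \<longleftrightarrow> nonneg_prof N xS \<and>
     (\<forall>y. nonneg_prof N y \<longrightarrow> welfare N p C y \<le> welfare N p C xS)"

definition efficiency :: "nat \<Rightarrow> (real \<Rightarrow> real) \<Rightarrow> (nat \<Rightarrow> real \<Rightarrow> real) \<Rightarrow> (nat \<Rightarrow> real) \<Rightarrow> (nat \<Rightarrow> real) \<Rightarrow> real" where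
  "efficiency N p C xS x = welfare N p C x / welfare N p C xS"

definition cournot_candidate :: "nat \<Rightarrow> (real \<Rightarrow> real) \<Rightarrow> (nat \<Rightarrow> real \<Rightarrow> real) \<Rightarrow> (nat \<Rightarrow> real) \<Rightarrow> bool" where
  "cournot_candidate N p C x \<longleftrightarrow> nonneg_prof N x \<and>
     (\<forall>n<N. (x n > 0 \<longrightarrow> mc C n (x n) \<le> p (total N x) + x n * lderiv p (total N x)) \<and>
            mc C n (x n) \<ge> p (total N x) + x n * rderiv p (total N x))"

end

theory Submission imports Defs begin

lemma slope_mono:
  fixes f :: "real \<Rightarrow> real"
  assumes cf: "convex_on {0..} f" and "0 \<le> a" "a < b" "a \<le> c" "c < d" "b \<le> d"
  shows "(f b - f a)/(b-a) \<le> (f d - f c)/(d-c)"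
proof -
  have 1: "(f b - f a)/(b-a) \<le> (f d - f a)/(d-a)"
  proof (cases "b = d")
    case False
    then have "(f a - f b)/(a-b) \<le> (f a - f d)/(a-d)"
      using convex_on_slope_le(1)[OF cf, of a d b] assms by auto
    then show ?thesis by (smt (verit) minus_divide_divide minus_diff_eq)
  qed simp
  have 2: "(f d - f a)/(d-a) \<le> (f d - f c)/(d-c)"
  proof (cases "a = c")
    case False
    then have "(f a - f d)/(a-d) \<le> (f c - f d)/(c-d)"
      using convex_on_slope_le(2)[OF cf, of a d c] assms by auto
    then show ?thesis by (smt (verit) minus_divide_divide minus_diff_eq)
  qed simp
  from 1 2 show ?thesis by linarith
qed

lemma chord_mono:
  fixes f :: "real \<Rightarrow> real"
  assumes cf: "convex_on {0..} f" and "0 \<le> s" "s \<le> u" "0 < t"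
  shows "f (s+t) - f s \<le> f (u+t) - f u"
proof -
  have "(f (s+t) - f s)/((s+t)-s) \<le> (f (u+t) - f u)/((u+t)-u)"
    by (rule slope_mono[OF cf]) (use assms in auto)
  then show ?thesis using assms by (simp add: divide_le_cancel)
qed

lemma rquot_tendsto:
  fixes f :: "real \<Rightarrow> real"
  assumes cf: "convex_on {0..} f" and mf: "mono_on {0..} f" and x: "0 \<le> x"
  shows "((\<lambda>h. (f (x + h) - f x) / h) \<longlongrightarrow> rderiv f x) (at_right 0)"
proof -
  let ?q = "\<lambda>h. (f (x + h) - f x) / h"
  have "(?q \<longlongrightarrow> Inf (?q ` ({0<..} \<inter> UNIV))) (at 0 within ({0<..} \<inter> UNIV))"
  proof (rule Lim_right_bound[where K=0])
    fix a b :: real assume "0 < a" "a \<le> b"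
    then show "?q a \<le> ?q b"
      using slope_mono[OF cf, of x "x+a" x "x+b"] x by (cases "a = b") auto
  next
    fix a :: real assume "0 < a"
    then have "f x \<le> f (x + a)" using mf x by (auto simp: mono_on_def)
    then show "0 \<le> ?q a" using \<open>0 < a\<close> by simp
  qed
  then have L: "(?q \<longlongrightarrow> Inf (?q ` {0<..})) (at_right 0)" by simp
  then have "rderiv f x = Inf (?q ` {0<..})"
    unfolding rderiv_def by (rule tendsto_Lim[rotated]) simp
  with L show ?thesis by simp
qed


lemma support_ge:
  fixes f :: "real \<Rightarrow> real"
  assumes cf: "convex_on {0..} f" and mf: "mono_on {0..} f" and x: "0 \<le> x" and y: "x \<le> y"
  shows "rderiv f x * (y - x) \<le> f y - f x"
proof (cases "x = y")
  case False
  then have xy: "x < y" using y by simp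
  have "rderiv f x \<le> (f y - f x) / (y - x)"
  proof (rule tendsto_upperbound[OF rquot_tendsto[OF cf mf x]])
    show "\<forall>\<^sub>F h in at_right 0. (f (x + h) - f x) / h \<le> (f y - f x) / (y - x)"
      unfolding eventually_at_right_field
    proof (intro exI[of _ "y - x"] conjI allI impI)
      fix h :: real assume "0 < h" "h < y - x"
      then show "(f (x + h) - f x) / h \<le> (f y - f x) / (y - x)"
        using slope_mono[OF cf, of x "x+h" x y] x by auto
    qed (use xy in auto)
  qed simp
  then show ?thesis using xy by (simp add: le_divide_eq)
qed simp

lemma support_lt:
  fixes f :: "real \<Rightarrow> real"
  assumes cf: "convex_on {0..} f" and mf: "mono_on {0..} f" and y: "0 \<le> y" and xy: "y < x"
  shows "f x - f y \<le> rderiv f x * (x - y)"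
proof -
  have "(f x - f y) / (x - y) \<le> rderiv f x"
  proof (rule tendsto_lowerbound[OF rquot_tendsto[OF cf mf]])
    show "\<forall>\<^sub>F h in at_right 0. (f x - f y) / (x - y) \<le> (f (x + h) - f x) / h"
      unfolding eventually_at_right_field
    proof (intro exI[of _ 1] conjI allI impI)
      fix h :: real assume "0 < h" "h < 1"
      then show "(f x - f y) / (x - y) \<le> (f (x + h) - f x) / h"
        using slope_mono[OF cf, of y x x "x+h"] y xy by auto
    qed auto
  qed (use y xy in auto)
  then show ?thesis using xy by (simp add: divide_le_eq)
qed

lemma right_cont:
  fixes p :: "real \<Rightarrow> real"
  assumes "continuous_on {0..} p" "0 \<le> a"
  shows "((\<lambda>t. p (a + t)) \<longlongrightarrow> p a) (at_right 0)"
proof -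
  have "(p \<longlongrightarrow> p a) (at a within {0..})" using assms by (simp add: continuous_on_def)
  then have "(p \<longlongrightarrow> p a) (at_right a)"
    by (rule tendsto_within_subset) (use assms in auto)
  then have "filterlim p (nhds (p a)) (filtermap (\<lambda>x. x + a) (at_right 0))"
    by (simp add: at_right_to_0[symmetric])
  then show ?thesis by (simp add: filterlim_filtermap add.commute)
qed

lemma sum_upd:
  fixes h :: "'a \<Rightarrow> 'b \<Rightarrow> 'c::ab_group_add"
  assumes "finite A" "n \<in> A"
  shows "(\<Sum>m\<in>A. h m ((f(n:=v)) m)) = (\<Sum>m\<in>A. h m (f m)) - h n (f n) + h n v"
proof -
  have "(\<Sum>m\<in>A. h m ((f(n:=v)) m)) = h n v + (\<Sum>m\<in>A-{n}. h m ((f(n:=v)) m))"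
    using assms by (simp add: sum.remove)
  also have "(\<Sum>m\<in>A-{n}. h m ((f(n:=v)) m)) = (\<Sum>m\<in>A-{n}. h m (f m))"
    by (rule sum.cong) auto
  also have "\<dots> = (\<Sum>m\<in>A. h m (f m)) - h n (f n)"
    using assms by (simp add: sum.remove)
  finally show ?thesis by simp
qed

lemma int_split:
  fixes p :: "real \<Rightarrow> real"
  assumes "continuous_on {0..} p" "0 \<le> a" "a \<le> b"
  shows "integral {0..b} p = integral {0..a} p + integral {a..b} p"
proof -
  have "p integrable_on {0..b}"
    by (rule integrable_continuous_interval, rule continuous_on_subset[OF assms(1)]) auto
  from Henstock_Kurzweil_Integration.integral_combine[OF _ _ this, of a] assms show ?thesis by simp
qed

lemma int_lb:
  fixes p :: "real \<Rightarrow> real"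
  assumes "continuous_on {0..} p" "0 \<le> a" "a \<le> b" "\<And>t. t \<in> {a..b} \<Longrightarrow> c \<le> p t"
  shows "(b - a) * c \<le> integral {a..b} p"
proof -
  have "p integrable_on {a..b}"
    by (rule integrable_continuous_interval, rule continuous_on_subset[OF assms(1)]) (use assms in auto)
  then have "integral {a..b} (\<lambda>_. c) \<le> integral {a..b} p"
    by (intro integral_le) (use assms in auto)
  then show ?thesis using assms by simp
qed

lemma int_const:
  fixes p :: "real \<Rightarrow> real"
  assumes "a \<le> b" "\<And>t. t \<in> {a..b} \<Longrightarrow> p t = c"
  shows "integral {a..b} p = (b - a) * c"
proof -
  have "integral {a..b} p = integral {a..b} (\<lambda>_. c)" by (rule integral_cong) (use assms in auto)
  then show ?thesis using assms by simp
qed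


theorem proposition8:
  fixes N :: nat and p :: "real \<Rightarrow> real" and C :: "nat \<Rightarrow> real \<Rightarrow> real"
    and x xS :: "nat \<Rightarrow> real"
  assumes N: "N \<ge> 1"
    and A1: "cost_assms N C"
    and A2: "demand_assms p"
    and A3: "\<exists>R>0. p R \<le> min_mc0 N C"
    and A4: "p 0 > min_mc0 N C"
    and cvx: "convex_on {0..} p"
    and cand: "cournot_candidate N p C x"
    and opt: "social_optimum N p C xS"
    and eq: "p (total N x) = p (total N xS)"
  shows "(p has_real_derivative 0) (at (total N x)) \<and> efficiency N p C xS x = 1"
proof -
  define X where "X = total N x"
  define XS where "XS = total N xS"
  define P where "P = p X"
  have xnn: "\<And>n. n < N \<Longrightarrow> 0 \<le> x n" using cand by (auto simp: cournot_candidate_def nonneg_prof_def)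
  have xSnn: "\<And>n. n < N \<Longrightarrow> 0 \<le> xS n" using opt by (auto simp: social_optimum_def nonneg_prof_def)
  have X0: "0 \<le> X" unfolding X_def total_def by (rule sum_nonneg) (simp add: xnn)
  have XS0: "0 \<le> XS" unfolding XS_def total_def by (rule sum_nonneg) (simp add: xSnn)
  have PS: "p XS = P" using eq by (simp add: X_def XS_def P_def)
  have candn: "\<And>n. n<N \<Longrightarrow> (x n > 0 \<longrightarrow> mc C n (x n) \<le> P + x n * lderiv p X) \<and> mc C n (x n) \<ge> P + x n * rderiv p X"
    using cand by (auto simp: cournot_candidate_def X_def P_def)
  have Cn: "\<And>n. n<N \<Longrightarrow> convex_on {0..} (C n) \<and> mono_on {0..} (C n) \<and> C n 0 = 0"
    using A1 by (auto simp: cost_assms_def)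
  have pmono: "\<And>a b. 0 \<le> a \<Longrightarrow> a \<le> b \<Longrightarrow> p b \<le> p a" using A2 by (auto simp: demand_assms_def)
  have pcont: "continuous_on {0..} p" using A2 by (auto simp: demand_assms_def)
  have optW: "\<And>y. nonneg_prof N y \<Longrightarrow> welfare N p C y \<le> welfare N p C xS"
    using opt by (auto simp: social_optimum_def)
  have minin: "min_mc0 N C \<in> (\<lambda>n. mc C n 0) ` {..<N}"
    unfolding min_mc0_def using N by (intro Min_in) (auto simp: lessThan_empty_iff)
  obtain n1 where n1: "n1 < N" "x n1 > 0"
  proof -
    have "\<exists>n<N. x n > 0"
    proof (rule ccontr)
      assume "\<not> ?thesis"
      then have z: "\<And>n. n<N \<Longrightarrow> x n = 0" using xnn by (meson linorder_neqE_linordered_idom not_le)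
      then have "X = 0" by (simp add: X_def total_def)
      have mc0: "mc C n 0 \<ge> p 0" if n: "n<N" for n
      proof -
        have "mc C n (x n) \<ge> P + x n * rderiv p X" using candn[OF n] by blast
        then show ?thesis using z[OF n] \<open>X = 0\<close> P_def by simp
      qed
      have "min_mc0 N C \<ge> p 0" using minin mc0 by auto
      with A4 show False by simp
    qed
    then show ?thesis using that by blast
  qed
  have "x n1 \<le> X" unfolding X_def total_def
    by (rule member_le_sum) (use n1 xnn in auto)
  then have Xpos: "X > 0" using n1 by simp
  obtain DL DR where DL: "has_left_deriv p X DL" and DR: "has_right_deriv p X DR"
    using A2 Xpos by (auto simp: demand_assms_def)
  have DLt: "((\<lambda>h. (p (X + h) - p X) / h) \<longlongrightarrow> DL) (at_left 0)" using DL by (simp add: has_left_deriv_def)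
  have DRt: "((\<lambda>h. (p (X + h) - p X) / h) \<longlongrightarrow> DR) (at_right 0)" using DR by (simp add: has_right_deriv_def)
  have lX: "lderiv p X = DL" unfolding lderiv_def by (rule tendsto_Lim[OF _ DLt]) simp
  have rX: "rderiv p X = DR" unfolding rderiv_def by (rule tendsto_Lim[OF _ DRt]) simp
  have DR0: "DR \<le> 0"
  proof (rule tendsto_upperbound[OF DRt])
    show "\<forall>\<^sub>F h in at_right 0. (p (X + h) - p X) / h \<le> 0"
      unfolding eventually_at_right_field
    proof (intro exI[of _ 1] conjI allI impI)
      fix h :: real assume "0 < h" "h < 1"
      then have "p (X + h) \<le> p X" using pmono[of X "X+h"] X0 by simp
      then show "(p (X + h) - p X) / h \<le> 0" using \<open>0 < h\<close> by (simp add: divide_le_0_iff)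
    qed simp
  qed simp
  have DLR: "DL \<le> DR"
  proof (rule tendsto_lowerbound[OF DRt])
    show "\<forall>\<^sub>F k in at_right 0. DL \<le> (p (X + k) - p X) / k"
      unfolding eventually_at_right_field
    proof (intro exI[of _ 1] conjI allI impI)
      fix k :: real assume k: "0 < k" "k < 1"
      show "DL \<le> (p (X + k) - p X) / k"
      proof (rule tendsto_upperbound[OF DLt])
        show "\<forall>\<^sub>F h in at_left 0. (p (X + h) - p X) / h \<le> (p (X + k) - p X) / k"
          unfolding eventually_at_left_field
        proof (intro exI[of _ "-X"] conjI allI impI)
          fix h :: real assume h: "-X < h" "h < 0"
          have "(p X - p (X + h)) / (X - (X + h)) \<le> (p (X + k) - p X) / ((X + k) - X)"
            by (rule slope_mono[OF cvx]) (use h k in auto)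
          moreover have "(p X - p (X + h)) / (X - (X + h)) = (p (X + h) - p X) / h"
            by (smt (verit) minus_divide_divide minus_diff_eq)
          ultimately show "(p (X + h) - p X) / h \<le> (p (X + k) - p X) / k" by simp
        qed (use Xpos in auto)
      qed simp
    qed simp
  qed simp
  have K: "X < XS" if DLneg: "DL < 0"
  proof -
    have lt: "x n < xS n" if n: "n < N" "x n > 0" for n
    proof (rule ccontr)
      assume "\<not> x n < xS n"
      then have sx: "xS n \<le> x n" by simp
      define s where "s = xS n"
      have s0: "0 \<le> s" using xSnn n by (simp add: s_def)
      have mclt: "mc C n (x n) < P"
      proof -
        have "mc C n (x n) \<le> P + x n * DL" using candn[OF n(1)] n lX by auto
        moreover have "x n * DL < 0" using n DLneg by (simp add: mult_pos_neg)
        ultimately show ?thesis by simp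
      qed
      have cvC: "convex_on {0..} (C n)" and mC: "mono_on {0..} (C n)" using Cn n by auto
      have ineq: "p (XS + t) \<le> (C n (x n + t) - C n (x n)) / t" if t: "t > 0" for t
      proof -
        define y where "y = xS(n := s + t)"
        have ynn: "nonneg_prof N y" using xSnn s0 t by (auto simp: y_def nonneg_prof_def)
        have ty: "total N y = XS + t"
          unfolding y_def total_def XS_def
          using sum_upd[of "{..<N}" n "\<lambda>m v. v" xS "s+t"] n s_def by simp
        have Cy: "(\<Sum>m<N. C m (y m)) = (\<Sum>m<N. C m (xS m)) - C n s + C n (s + t)"
          unfolding y_def using sum_upd[of "{..<N}" n C xS "s+t"] n s_def by simp
        have "welfare N p C y \<le> welfare N p C xS" by (rule optW[OF ynn])
        then have "integral {0..XS+t} p - integral {0..XS} p \<le> C n (s + t) - C n s"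
          unfolding welfare_def ty Cy XS_def[symmetric] by simp
        moreover have "integral {0..XS+t} p = integral {0..XS} p + integral {XS..XS+t} p"
          by (rule int_split[OF pcont]) (use XS0 t in auto)
        moreover have "(XS + t - XS) * p (XS + t) \<le> integral {XS..XS+t} p"
        proof (rule int_lb[OF pcont])
          fix u assume "u \<in> {XS..XS+t}"
          then show "p (XS + t) \<le> p u" using pmono[of u "XS+t"] XS0 by simp
        qed (use XS0 t in auto)
        moreover have "C n (s + t) - C n s \<le> C n (x n + t) - C n (x n)"
          by (rule chord_mono[OF cvC]) (use s0 sx t s_def in auto)
        ultimately have "t * p (XS + t) \<le> C n (x n + t) - C n (x n)" by simp
        then show ?thesis using t by (simp add: le_divide_eq mult.commute)
      qed
      have "p XS \<le> mc C n (x n)"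
      proof (rule tendsto_le[OF _ _ right_cont[OF pcont XS0]])
        show "((\<lambda>t. (C n (x n + t) - C n (x n)) / t) \<longlongrightarrow> mc C n (x n)) (at_right 0)"
          unfolding mc_def by (rule rquot_tendsto[OF cvC mC]) (use n in simp)
        show "\<forall>\<^sub>F t in at_right 0. p (XS + t) \<le> (C n (x n + t) - C n (x n)) / t"
          using eventually_at_right_less[of "0::real"] by eventually_elim (rule ineq)
      qed simp
      with mclt PS show False by simp
    qed
    have "(\<Sum>m<N. x m) < (\<Sum>m<N. xS m)"
    proof (rule sum_strict_mono_ex1)
      show "\<forall>m\<in>{..<N}. x m \<le> xS m"
      proof
        fix m assume "m \<in> {..<N}"
        then show "x m \<le> xS m" using lt[of m] xnn[of m] xSnn[of m] by (cases "x m > 0") auto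
      qed
      show "\<exists>m\<in>{..<N}. x m < xS m" using lt n1 by auto
    qed simp
    then show ?thesis by (simp add: X_def XS_def total_def)
  qed
  have D0: "DL = 0 \<and> DR = 0"
  proof (cases "X < XS")
    case True
    have pc: "p t = P" if "t \<in> {X..XS}" for t
    proof -
      have "p t \<le> p X" using pmono[of X t] that X0 by simp
      moreover have "p XS \<le> p t" using pmono[of t XS] that X0 by simp
      ultimately show ?thesis using PS P_def by simp
    qed
    have "((\<lambda>h. (p (X + h) - p X) / h) \<longlongrightarrow> 0) (at_right 0)"
    proof (rule tendsto_eventually)
      show "\<forall>\<^sub>F h in at_right 0. (p (X + h) - p X) / h = 0"
        unfolding eventually_at_right_field
      proof (intro exI[of _ "XS - X"] conjI allI impI)
        fix h :: real assume h: "0 < h" "h < XS - X"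
        then have "p (X + h) = P" using pc[of "X+h"] by simp
        then show "(p (X + h) - p X) / h = 0" using P_def by simp
      qed (use True in simp)
    qed
    then have R: "DR = 0" using tendsto_unique[OF _ DRt] by simp
    have "mc C n1 (x n1) \<ge> P" using candn[OF n1(1)] rX R by simp
    moreover have "mc C n1 (x n1) \<le> P + x n1 * DL" using candn[OF n1(1)] n1 lX by simp
    ultimately have "0 \<le> x n1 * DL" by simp
    then have "0 \<le> DL" using n1 by (simp add: zero_le_mult_iff)
    then show ?thesis using R DLR by simp
  next
    case False
    have "\<not> DL < 0" using K False by blast
    then have "DL = 0" using DLR DR0 by linarith
    then show ?thesis using DLR DR0 by simp
  qed
  have deriv: "(p has_real_derivative 0) (at X)"
    unfolding DERIV_def filterlim_at_split using DLt DRt D0 by simp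
  have mcge: "P \<le> mc C n (x n)" if n: "n<N" for n
  proof -
    have "mc C n (x n) \<ge> P + x n * rderiv p X" using candn[OF n] by blast
    then show ?thesis using rX D0 by simp
  qed
  have mcle: "mc C n (x n) \<le> P" if n: "n<N" and xp: "x n > 0" for n
  proof -
    have "mc C n (x n) \<le> P + x n * lderiv p X" using candn[OF n] xp by blast
    then show ?thesis using lX D0 by simp
  qed
  have supp: "P * (xS n - x n) \<le> C n (xS n) - C n (x n)" if n: "n < N" for n
  proof -
    have cvC: "convex_on {0..} (C n)" and mC: "mono_on {0..} (C n)" using Cn n by auto
    show ?thesis
    proof (cases "x n \<le> xS n")
      case True
      have "mc C n (x n) * (xS n - x n) \<le> C n (xS n) - C n (x n)"
        unfolding mc_def by (rule support_ge[OF cvC mC xnn[OF n] True])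
      moreover have "P * (xS n - x n) \<le> mc C n (x n) * (xS n - x n)"
        using mcge[OF n] True by (simp add: mult_right_mono)
      ultimately show ?thesis by simp
    next
      case False
      then have xp: "x n > 0" using xSnn[OF n] by simp
      have "C n (x n) - C n (xS n) \<le> mc C n (x n) * (x n - xS n)"
        unfolding mc_def by (rule support_lt[OF cvC mC xSnn[OF n]]) (use False in simp)
      moreover have "mc C n (x n) * (x n - xS n) \<le> P * (x n - xS n)"
        using mcle[OF n xp] False by (simp add: mult_right_mono)
      ultimately show ?thesis by (simp add: algebra_simps)
    qed
  qed
  have sumC: "P * (XS - X) \<le> (\<Sum>m<N. C m (xS m)) - (\<Sum>m<N. C m (x m))"
  proof -
    have "P * (XS - X) = (\<Sum>m<N. P * (xS m - x m))"
      by (simp add: XS_def X_def total_def sum_distrib_left sum_subtractf algebra_simps)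
    also have "\<dots> \<le> (\<Sum>m<N. C m (xS m) - C m (x m))" by (rule sum_mono) (use supp in auto)
    also have "\<dots> = (\<Sum>m<N. C m (xS m)) - (\<Sum>m<N. C m (x m))" by (simp add: sum_subtractf)
    finally show ?thesis .
  qed
  have intd: "integral {0..XS} p - integral {0..X} p = P * (XS - X)"
  proof (cases "X \<le> XS")
    case True
    have "integral {X..XS} p = (XS - X) * P"
    proof (rule int_const)
      fix t assume t: "t \<in> {X..XS}"
      have "p t \<le> p X" using pmono[of X t] t X0 by simp
      moreover have "p XS \<le> p t" using pmono[of t XS] t X0 by simp
      ultimately show "p t = P" using PS P_def by simp
    qed (use True in simp)
    then show ?thesis using int_split[OF pcont X0 True] by simp
  next
    case False
    have "integral {XS..X} p = (X - XS) * P"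
    proof (rule int_const)
      fix t assume t: "t \<in> {XS..X}"
      have "p t \<le> p XS" using pmono[of XS t] t XS0 by simp
      moreover have "p X \<le> p t" using pmono[of t X] t XS0 by simp
      ultimately show "p t = P" using PS P_def by simp
    qed (use False in simp)
    then show ?thesis using int_split[OF pcont XS0, of X] False by (simp add: algebra_simps)
  qed
  have Wge: "welfare N p C xS \<le> welfare N p C x"
    using sumC intd unfolding welfare_def X_def[symmetric] XS_def[symmetric] by simp
  have Wle: "welfare N p C x \<le> welfare N p C xS"
    using optW cand by (simp add: cournot_candidate_def)
  obtain n0 where n0: "n0 < N" "mc C n0 0 < p 0" using minin A4 by auto
  have cv0: "convex_on {0..} (C n0)" and m0: "mono_on {0..} (C n0)" and z0: "C n0 0 = 0" using Cn n0 by auto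
  have q0: "((\<lambda>h. C n0 h / h) \<longlongrightarrow> mc C n0 0) (at_right 0)"
    using rquot_tendsto[OF cv0 m0, of 0] z0 by (simp add: mc_def)
  have "((\<lambda>h. p h - C n0 h / h) \<longlongrightarrow> p 0 - mc C n0 0) (at_right 0)"
    using tendsto_diff[OF right_cont[OF pcont, of 0] q0] by simp
  then have "\<forall>\<^sub>F h in at_right 0. 0 < p h - C n0 h / h"
    using n0 by (intro order_tendstoD(1)) auto
  then obtain b where b: "b > 0" "\<And>h. 0 < h \<Longrightarrow> h < b \<Longrightarrow> 0 < p h - C n0 h / h"
    unfolding eventually_at_right_field by auto
  define h where "h = b / 2"
  have h: "0 < h" "C n0 h < h * p h"
    using b(2)[of h] b(1) by (auto simp: h_def field_simps)
  define y where "y = (\<lambda>_. 0::real)(n0 := h)"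
  have ynn: "nonneg_prof N y" using h by (auto simp: y_def nonneg_prof_def)
  have ty: "total N y = h"
    unfolding y_def total_def using sum_upd[of "{..<N}" n0 "\<lambda>m v. v" "\<lambda>_. 0" h] n0 by simp
  have Cy: "(\<Sum>m<N. C m (y m)) = C n0 h"
  proof -
    have "(\<Sum>m<N. C m (y m)) = (\<Sum>m<N. C m 0) - C n0 0 + C n0 h"
      unfolding y_def using sum_upd[of "{..<N}" n0 C "\<lambda>_. 0" h] n0 by simp
    also have "(\<Sum>m<N. C m 0) = 0" using Cn by simp
    finally show ?thesis using z0 by simp
  qed
  have "(h - 0) * p h \<le> integral {0..h} p"
  proof (rule int_lb[OF pcont])
    fix u assume "u \<in> {0..h}"
    then show "p h \<le> p u" using pmono[of u h] by simp
  qed (use h in auto)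
  then have "0 < welfare N p C y" unfolding welfare_def ty Cy using h by simp
  then have Wpos: "0 < welfare N p C xS" using optW[OF ynn] by simp
  have "efficiency N p C xS x = 1"
    unfolding efficiency_def using Wge Wle Wpos by simp
  then show ?thesis using deriv X_def by simp
qed

end
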